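(* Let $\mathbf{V}\in\mathbb{R}^{N\times N}$ and $\mathbf{A}\in\mathbb{R}^{T\times N}$ satisfy $\mathbf{1}_N^\top\mathbf{V}=\mathbf{1}_N^\top$, $\mathbf{1}_T^\top\mathbf{A}=\mathbf{1}_N^\top$, $\mathbf{V}\boldsymbol\mu=\boldsymbol\mu$. Then $$\mathbb{E}\hat\nabla_{\mathbf{A}}l=K_P\alpha_V(\alpha_V\alpha_A-1)\Big(\mathbf{Q}-\frac{\mathbf{1}_T\mathbf{1}_N^\top}{T}\Big)+K_P\alpha_V^2\boldsymbol\Delta_A+\|\boldsymbol\Delta_V\|_\mu^2\Big(\mathbf{A}-\frac{\mathbf{1}_T\mathbf{1}_N^\top}{T}\Big),$$ $$\mathbb{E}\hat\nabla_{\mathbf{V}}l=\alpha_AK_Q(\alpha_A\alpha_V-1)(\mathbf{P}-\boldsymbol\mu\mathbf{1}^\top)+\frac{\alpha_V-1}{T}(\mathbf{P}-\boldsymbol\mu\mathbf{1}^\top)+\Big(\alpha_A^2K_Q+\frac1T\Big)\boldsymbol\Delta_V+\|\boldsymbol\Delta_A\|_\mu^2(\mathbf{V}-\boldsymbol\mu\mathbf{1}^\top).$$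
   Context: $\boldsymbol\mu\in\mathbb{R}^N$ is a probability vector with positive entries; $\mathbf{P}\in\mathbb{R}^{N\times N}$ has nonnegative entries, columns summing to $1$, $\mathbf{P}\boldsymbol\mu=\boldsymbol\mu$; $\mathbf{Q}=(\mathbf{q}^{(1)},\dots,\mathbf{q}^{(N)})\in\mathbb{R}^{T\times N}$ has probability-vector columns. Data: $x_1,\dots,x_{T+1}$ i.i.d. with law $\boldsymbol\mu$, $x_o$ with $\Pr(x_o=n\mid x_{T+1}=k,x_1,\dots,x_T)=\sum_tq^{(k)}_tP_{n,x_t}$; $\mathbf{X}=(\mathbf{e}_{x_1},\dots,\mathbf{e}_{x_T})$; loss $l=\frac12\|\mathbf{e}_{x_o}-\mathbf{V}\mathbf{X}\mathbf{A}\mathbf{e}_{x_{T+1}}\|^2$; $\mathbf{a}^{(k)}$ the columns of $\mathbf{A}$. Preconditioned gradients: $\hat\nabla_{\mathbf{V}}l=(\mathbf{I}_N-\mathbf{1}\mathbf{1}^\top/N)(\nabla_{\mathbf{V}}l)\operatorname{diag}(1/\boldsymbol\mu)(\mathbf{I}_N-\boldsymbol\mu\boldsymbol\mu^\top/\|\boldsymbol\mu\|^2)$; $\hat\nabla_{\mathbf{A}}l$ is the $T\times N$ matrix with columns $\frac1{\mu_k}(\mathbf{I}_T-\mathbf{1}\mathbf{1}^\top/T)\nabla_{\mathbf{a}^{(k)}}l$. $\mathbb{E}$ is expectation over data with parameters fixed. $\langle\mathbf{M},\mathbf{M}'\rangle_\mu=\operatorname{Tr}(\mathbf{M}\operatorname{diag}(\boldsymbol\mu)\mathbf{M}'^\top)$,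 $\|\mathbf{M}\|_\mu^2=\langle\mathbf{M},\mathbf{M}\rangle_\mu$. $K_P=\|\mathbf{P}\|_\mu^2-\|\boldsymbol\mu\|^2>0$, $K_Q=\|\mathbf{Q}\|_\mu^2-1/T>0$, $\alpha_V=(\langle\mathbf{V},\mathbf{P}\rangle_\mu-\|\boldsymbol\mu\|^2)/K_P$, $\alpha_A=(\langle\mathbf{A},\mathbf{Q}\rangle_\mu-1/T)/K_Q$, $\boldsymbol\Delta_V=\mathbf{V}-\alpha_V\mathbf{P}-(1-\alpha_V)\boldsymbol\mu\mathbf{1}^\top$, $\boldsymbol\Delta_A=\mathbf{A}-\alpha_A\mathbf{Q}-(1-\alpha_A)\mathbf{1}\mathbf{1}^\top/T$. *)

theory Defs
  imports "HOL-Analysis.Analysis"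
begin

text \<open>Index type 'n has N = CARD('n) elements, index type 't has
T = CARD('t) elements. A matrix M in R^{m x n} is a value of type real^'n^'m with
entry M_{ij} = M$i$j. Thus mu :: real^'n, P,V :: real^'n^'n, Q,A :: real^'n^'t
(Q$t$k = q^(k)_t, column k of A is a^(k)).\<close>

definition diag_vec :: "real^'n \<Rightarrow> real^'n^'n" where
  "diag_vec v = (\<chi> i j. if i = j then v$i else 0)"

definition const_mat :: "real \<Rightarrow> real^'n^'m" where
  "const_mat c = (\<chi> i j. c)"

definition mu_ones :: "real^'n \<Rightarrow> real^'n^'n" where
  "mu_ones mu = (\<chi> i j. mu$i)"

definition outer :: "real^'n \<Rightarrow> real^'n \<Rightarrow> real^'n^'n" where
  "outer u v = (\<chi> i j. u$i * v$j)"

definition mu_inner :: "real^'n \<Rightarrow> real^'n^'m \<Rightarrow> real^'n^'m \<Rightarrow> real" where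
  "mu_inner mu M M' = trace (M ** diag_vec mu ** transpose M')"

definition mu_norm2 :: "real^'n \<Rightarrow> real^'n^'m \<Rightarrow> real" where
  "mu_norm2 mu M = mu_inner mu M M"

definition grad :: "('a::real_inner \<Rightarrow> real) \<Rightarrow> 'a \<Rightarrow> 'a" where
  "grad f x = (THE g. (f has_derivative (\<lambda>h. g \<bullet> h)) (at x))"

definition Xmat :: "('t \<Rightarrow> 'n) \<Rightarrow> real^'t^'n" where
  "Xmat xs = (\<chi> i t. if xs t = i then 1 else 0)"

text \<open>loss l = 1/2 ||e_{x_o} - V X A e_{x_{T+1}}||^2 ; k = x_{T+1}, xo = x_o\<close>
definition loss :: "real^'n^'n \<Rightarrow> real^'n^'t \<Rightarrow> ('t \<Rightarrow> 'n) \<Rightarrow> 'n \<Rightarrow> 'n \<Rightarrow> real" where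
  "loss V A xs k xo = 1/2 * (norm (axis xo 1 - V *v (Xmat xs *v column k A)))^2"

definition upd_col :: "real^'n^'t \<Rightarrow> 'n \<Rightarrow> real^'t \<Rightarrow> real^'n^'t" where
  "upd_col A j a = (\<chi> t i. if i = j then a$t else A$t$i)"

definition pgrad_V :: "real^'n \<Rightarrow> real^'n^'n \<Rightarrow> real^'n^'t \<Rightarrow> ('t \<Rightarrow> 'n) \<Rightarrow> 'n \<Rightarrow> 'n \<Rightarrow> real^'n^'n" where
  "pgrad_V mu V A xs k xo =
     (mat 1 - const_mat (1 / real CARD('n))) ** grad (\<lambda>V'. loss V' A xs k xo) V
       ** diag_vec (\<chi> i. 1 / mu$i) ** (mat 1 - (1 / (norm mu)^2) *\<^sub>R outer mu mu)"

definition pgrad_A :: "real^'n \<Rightarrow> real^'n^'n \<Rightarrow> real^'n^'t \<Rightarrow> ('t \<Rightarrow> 'n) \<Rightarrow> 'n \<Rightarrow> 'n \<Rightarrow> real^'n^'t" where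
  "pgrad_A mu V A xs k xo =
     (\<chi> t j. (1 / mu$j) * (((mat 1 - const_mat (1 / real CARD('t)) :: real^'t^'t)
        *v grad (\<lambda>a. loss V (upd_col A j a) xs k xo) (column j A)) $ t))"

text \<open>Expectation over x_1..x_T, x_{T+1} iid mu and x_o with
  Pr(x_o = n | x_{T+1}=k, x_1..x_T) = sum_t q^(k)_t P_{n,x_t}.\<close>
definition expect :: "real^'n \<Rightarrow> real^'n^'n \<Rightarrow> real^'n^'t \<Rightarrow>
     (('t \<Rightarrow> 'n) \<Rightarrow> 'n \<Rightarrow> 'n \<Rightarrow> 'b::real_vector) \<Rightarrow> 'b" where
  "expect mu P Q f = (\<Sum>xs\<in>UNIV. \<Sum>k\<in>UNIV. \<Sum>xo\<in>UNIV.
      ((\<Prod>t\<in>UNIV. mu$(xs t)) * mu$k * (\<Sum>t\<in>UNIV. Q$t$k * P$xo$(xs t))) *\<^sub>R f xs k xo)"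

end

theory Submission
  imports Defs
begin


lemma sum_prod_fun:
  fixes c :: "'t::finite \<Rightarrow> 'n::finite \<Rightarrow> real"
  shows "(\<Sum>xs\<in>(UNIV::('t\<Rightarrow>'n) set). \<Prod>t\<in>UNIV. c t (xs t)) = (\<Prod>t\<in>UNIV. \<Sum>z\<in>UNIV. c t z)"
  using prod_sum_PiE[of "UNIV::'t set" "\<lambda>_. UNIV::'n set" c] by simp

lemma sum_ind1: "(\<Sum>z\<in>(UNIV::'a::finite set). f z * (if z = y then 1 else (0::real))) = f y"
proof -
  have "(\<Sum>z\<in>UNIV. f z * (if z = y then 1 else (0::real))) = (\<Sum>z\<in>UNIV. if z = y then f z else 0)"
    by (rule sum.cong) auto
  then show ?thesis using sum.delta[of UNIV y f] by simp
qed

lemma sum_ind1': "(\<Sum>z\<in>(UNIV::'a::finite set). f z * (if y = z then 1 else (0::real))) = f y"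
  using sum_ind1[of f y] by (simp add: eq_commute)

lemma ind_mult: "(if P then 1 else (0::real)) * (if Q then 1 else 0) = (if P \<and> Q then 1 else 0)"
  by simp

lemma sum_ind2: "(\<Sum>z\<in>(UNIV::'a::finite set). f z * (if z = x \<and> z = y then 1 else (0::real))) = (if x = y then f x else 0)"
proof -
  have "(\<Sum>z\<in>UNIV. f z * (if z = x \<and> z = y then 1 else (0::real))) = (\<Sum>z\<in>UNIV. if z = x then (if x = y then f z else 0) else 0)"
    by (rule sum.cong) auto
  then show ?thesis using sum.delta[of UNIV x f] by (cases "x = y") simp_all
qed

lemma mom_ind:
  fixes mu :: "real^'n::finite"
  assumes mu_sum: "(\<Sum>i\<in>UNIV. mu$i) = 1"
  shows "(\<Sum>xs\<in>(UNIV::('t::finite\<Rightarrow>'n) set). (\<Prod>t\<in>UNIV. mu$(xs t)) * ((if xs s = x then 1 else 0) * (if xs r = y then 1 else 0)))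
        = (if s = r then (if x = y then mu$x else 0) else mu$x * mu$y)"
proof -
  define c where "c t z = mu$z * (if t = s then (if z = x then 1 else 0) else 1) * (if t = r then (if z = y then 1 else 0) else 1)" for t z
  have "\<And>xs::'t\<Rightarrow>'n. (\<Prod>t\<in>UNIV. mu$(xs t)) * ((if xs s = x then 1 else 0) * (if xs r = y then 1 else 0)) = (\<Prod>t\<in>UNIV. c t (xs t))"
  proof -
    fix xs :: "'t\<Rightarrow>'n"
    have "(\<Prod>t\<in>UNIV. c t (xs t)) = (\<Prod>t\<in>UNIV. mu$(xs t)) * (\<Prod>t\<in>UNIV. (if t = s then (if xs t = x then 1 else 0) else 1)) * (\<Prod>t\<in>UNIV. (if t = r then (if xs t = y then 1 else 0) else 1))"
      unfolding c_def prod.distrib by simp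
    also have "\<dots> = (\<Prod>t\<in>UNIV. mu$(xs t)) * ((if xs s = x then 1 else 0) * (if xs r = y then 1 else 0))"
      by (simp add: prod.If_cases)
    finally show "?thesis xs" by simp
  qed
  then have "(\<Sum>xs\<in>(UNIV::('t\<Rightarrow>'n) set). (\<Prod>t\<in>UNIV. mu$(xs t)) * ((if xs s = x then 1 else 0) * (if xs r = y then 1 else 0)))
     = (\<Prod>t\<in>UNIV. \<Sum>z\<in>UNIV. c t z)" by (simp add: sum_prod_fun)
  also have "\<dots> = (if s = r then (if x = y then mu$x else 0) else mu$x * mu$y)"
  proof (cases "s = r")
    case True
    have "(\<Prod>t\<in>UNIV. \<Sum>z\<in>UNIV. c t z) = (\<Prod>t\<in>UNIV. if t = s then (if x = y then mu$x else 0) else 1)"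
      by (rule prod.cong) (auto simp: c_def True mu_sum mult.assoc ind_mult sum_ind1 sum_ind2)
    then show ?thesis using True by (simp add: prod.If_cases)
  next
    case False
    have "(\<Prod>t\<in>UNIV. \<Sum>z\<in>UNIV. c t z) = (\<Prod>t\<in>UNIV. if t = s then mu$x else if t = r then mu$y else 1)"
      by (rule prod.cong) (use False in \<open>auto simp: c_def mu_sum sum_ind1\<close>)
    also have "\<dots> = mu$x * (\<Prod>t\<in>UNIV-{s}. if t = r then mu$y else 1)"
      by (subst prod.remove[of UNIV s]) (auto intro!: prod.cong)
    also have "\<dots> = mu$x * mu$y"
      using False by (subst prod.remove[of "UNIV-{s}" r]) (auto intro!: prod.neutral)
    finally show ?thesis using False by simp
  qed
  finally show ?thesis .
qed

lemma mom2:
  fixes mu :: "real^'n::finite" and F :: "'n \<Rightarrow> 'n \<Rightarrow> real"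
  assumes mu_sum: "(\<Sum>i\<in>UNIV. mu$i) = 1"
  shows "(\<Sum>xs\<in>(UNIV::('t::finite\<Rightarrow>'n) set). (\<Prod>t\<in>UNIV. mu$(xs t)) * F (xs s) (xs r))
        = (if s = r then (\<Sum>x\<in>UNIV. mu$x * F x x) else (\<Sum>x\<in>UNIV. \<Sum>y\<in>UNIV. mu$x * mu$y * F x y))"
proof -
  have e: "F (xs s) (xs r) = (\<Sum>x\<in>UNIV. \<Sum>y\<in>UNIV. F x y * ((if xs s = x then 1 else 0) * (if xs r = y then 1 else 0)))" for xs :: "'t \<Rightarrow> 'n"
    by (simp add: mult.assoc[symmetric] sum_ind1')
  have "(\<Sum>xs\<in>(UNIV::('t\<Rightarrow>'n) set). (\<Prod>t\<in>UNIV. mu$(xs t)) * F (xs s) (xs r))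
     = (\<Sum>x\<in>UNIV. \<Sum>y\<in>UNIV. F x y * (\<Sum>xs\<in>(UNIV::('t\<Rightarrow>'n) set). (\<Prod>t\<in>UNIV. mu$(xs t)) * ((if xs s = x then 1 else 0) * (if xs r = y then 1 else 0))))"
    unfolding e by (simp add: sum_distrib_left sum_distrib_right mult_ac sum.swap[of _ "UNIV::('t\<Rightarrow>'n) set"])
  also have "\<dots> = (\<Sum>x\<in>UNIV. \<Sum>y\<in>UNIV. F x y * (if s = r then (if x = y then mu$x else 0) else mu$x * mu$y))"
    by (simp add: mom_ind[OF mu_sum])
  also have "\<dots> = (if s = r then (\<Sum>x\<in>UNIV. mu$x * F x x) else (\<Sum>x\<in>UNIV. \<Sum>y\<in>UNIV. mu$x * mu$y * F x y))"
  proof (cases "s = r")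
    case True
    have "(\<Sum>x\<in>UNIV. \<Sum>y\<in>UNIV. F x y * (if x = y then mu$x else 0)) = (\<Sum>x\<in>UNIV. mu$x * F x x)"
    proof (rule sum.cong)
      fix x
      have "(\<Sum>y\<in>UNIV. F x y * (if x = y then mu$x else 0)) = (\<Sum>y\<in>UNIV. if y = x then F x y * mu$x else 0)"
        by (rule sum.cong) auto
      then show "(\<Sum>y\<in>UNIV. F x y * (if x = y then mu$x else 0)) = mu$x * F x x" by simp
    qed simp
    then show ?thesis using True by simp
  qed (simp add: mult_ac)
  finally show ?thesis .
qed

lemma Ebil:
  fixes mu :: "real^'n::finite" and F :: "'n \<Rightarrow> 'n \<Rightarrow> real" and a b :: "'t::finite \<Rightarrow> real"
  assumes mu_sum: "(\<Sum>i\<in>UNIV. mu$i) = 1"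
  shows "(\<Sum>xs\<in>(UNIV::('t\<Rightarrow>'n) set). (\<Prod>t\<in>UNIV. mu$(xs t)) * (\<Sum>s\<in>UNIV. \<Sum>r\<in>UNIV. a s * b r * F (xs s) (xs r)))
    = sum a UNIV * sum b UNIV * (\<Sum>x\<in>UNIV. \<Sum>y\<in>UNIV. mu$x * mu$y * F x y)
      + (\<Sum>s\<in>UNIV. a s * b s) * ((\<Sum>x\<in>UNIV. mu$x * F x x) - (\<Sum>x\<in>UNIV. \<Sum>y\<in>UNIV. mu$x * mu$y * F x y))"
proof -
  define M where "M = (\<Sum>x\<in>UNIV. \<Sum>y\<in>UNIV. mu$x * mu$y * F x y)"
  define D where "D = (\<Sum>x\<in>UNIV. mu$x * F x x)"
  have "(\<Sum>xs\<in>(UNIV::('t\<Rightarrow>'n) set). (\<Prod>t\<in>UNIV. mu$(xs t)) * (\<Sum>s\<in>UNIV. \<Sum>r\<in>UNIV. a s * b r * F (xs s) (xs r)))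
     = (\<Sum>s\<in>UNIV. \<Sum>r\<in>UNIV. a s * b r * (\<Sum>xs\<in>(UNIV::('t\<Rightarrow>'n) set). (\<Prod>t\<in>UNIV. mu$(xs t)) * F (xs s) (xs r)))"
    by (simp add: sum_distrib_left mult_ac sum.swap[of _ "UNIV::('t\<Rightarrow>'n) set"])
  also have "\<dots> = (\<Sum>s\<in>UNIV. \<Sum>r\<in>UNIV. a s * b r * M + (if r = s then a s * b s * (D - M) else 0))"
    by (rule sum.cong[OF refl], rule sum.cong[OF refl]) (simp only: mom2[OF mu_sum], auto simp: M_def D_def algebra_simps)
  also have "\<dots> = sum a UNIV * sum b UNIV * M + (\<Sum>s\<in>UNIV. a s * b s) * (D - M)"
  proof -
    have 1: "(\<Sum>s\<in>UNIV. \<Sum>r\<in>UNIV. a s * b r * M) = sum a UNIV * sum b UNIV * M"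
    proof -
      have "(\<Sum>s\<in>UNIV. \<Sum>r\<in>UNIV. a s * b r * M) = (\<Sum>s\<in>UNIV. a s * (sum b UNIV * M))"
        by (rule sum.cong[OF refl]) (simp add: sum_distrib_left sum_distrib_right mult_ac)
      also have "\<dots> = sum a UNIV * (sum b UNIV * M)" by (rule sum_distrib_right[symmetric])
      finally show ?thesis by simp
    qed
    have 2: "(\<Sum>s\<in>UNIV. \<Sum>r\<in>UNIV. (if r = s then a s * b s * (D - M) else 0)) = (\<Sum>s\<in>UNIV. a s * b s) * (D - M)"
      by (simp add: sum_distrib_right)
    show ?thesis using 1 2 by (simp add: sum.distrib)
  qed
  finally show ?thesis unfolding M_def D_def .
qed

lemma grad_eq:
  assumes "(f has_derivative (\<lambda>h. g \<bullet> h)) (at x)"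
  shows "grad f x = g"
  unfolding grad_def
proof (rule the_equality)
  fix g' assume "(f has_derivative (\<lambda>h. g' \<bullet> h)) (at x)"
  then have "(\<lambda>h. g' \<bullet> h) = (\<lambda>h. g \<bullet> h)" using has_derivative_unique assms by blast
  then have "g' \<bullet> (g' - g) = g \<bullet> (g' - g)" by metis
  then have "(g' - g) \<bullet> (g' - g) = 0" by (simp add: inner_diff_left)
  then show "g' = g" by simp
qed (rule assms)

lemma bl_mv: "bounded_linear (\<lambda>M::real^'n::finite^'m::finite. M *v y)"
  unfolding linear_conv_bounded_linear[symmetric]
  by (rule linearI) (simp_all add: matrix_vector_mult_add_rdistrib scaleR_matrix_vector_assoc)

lemma bl_mv2: "bounded_linear (\<lambda>x::real^'n::finite. (M::real^'n^'m::finite) *v x)"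
  unfolding linear_conv_bounded_linear[symmetric] by simp

lemma sq_deriv:
  fixes L :: "'a::euclidean_space \<Rightarrow> real^'n::finite"
  assumes L: "bounded_linear L"
  shows "((\<lambda>x. 1/2 * (norm (e - L x))^2) has_derivative (\<lambda>h. - ((e - L x) \<bullet> L h))) (at x)"
proof -
  have eq: "(\<lambda>x. 1/2 * (norm (e - L x))^2) = (\<lambda>x. 1/2 * ((e - L x) \<bullet> (e - L x)))"
    by (simp add: power2_norm_eq_inner)
  show ?thesis unfolding eq
    by (rule derivative_eq_intros bounded_linear.has_derivative[OF L] | simp)+ (simp add: inner_commute)
qed

lemma column_upd: "column k (upd_col A j a) = (if k = j then a else column k A)"
  by (auto simp: column_def upd_col_def vec_eq_iff)

lemma gradV:
  "grad (\<lambda>V'. loss V' A xs k xo) V =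
     (\<chi> i j. - ((axis xo 1 - V *v (Xmat xs *v column k A))$i * (Xmat xs *v column k A)$j))"
proof (rule grad_eq)
  define y where "y = Xmat xs *v column k A"
  define r where "r = axis xo 1 - V *v y"
  have "((\<lambda>V'. loss V' A xs k xo) has_derivative (\<lambda>h. - (r \<bullet> (h *v y)))) (at V)"
    unfolding loss_def y_def[symmetric] r_def by (rule sq_deriv[OF bl_mv])
  moreover have "- (r \<bullet> (h *v y)) = (\<chi> i j. - (r$i * y$j)) \<bullet> h" for h
    by (simp add: inner_vec_def matrix_vector_mult_def sum_distrib_left sum_negf mult_ac)
  ultimately show "((\<lambda>V'. loss V' A xs k xo) has_derivative (\<lambda>h. (\<chi> i j. - ((axis xo 1 - V *v (Xmat xs *v column k A))$i * (Xmat xs *v column k A)$j)) \<bullet> h)) (at V)"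
    unfolding r_def y_def by simp
qed

lemma gradA:
  "grad (\<lambda>a. loss V (upd_col A j a) xs k xo) (column j A) =
     (if j = k then - (transpose (Xmat xs) *v (transpose V *v (axis xo 1 - V *v (Xmat xs *v column k A)))) else 0)"
proof (rule grad_eq)
  show "((\<lambda>a. loss V (upd_col A j a) xs k xo) has_derivative (\<lambda>h. (if j = k then - (transpose (Xmat xs) *v (transpose V *v (axis xo 1 - V *v (Xmat xs *v column k A)))) else 0) \<bullet> h)) (at (column j A))"
  proof (cases "j = k")
    case True
    define r where "r = axis xo 1 - V *v (Xmat xs *v column k A)"
    have bl: "bounded_linear (\<lambda>a. V *v (Xmat xs *v a))"
      unfolding linear_conv_bounded_linear[symmetric] by (rule linearI) (simp_all add: matrix_vector_right_distrib matrix_vector_mult_scaleR)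
    have "((\<lambda>a. loss V (upd_col A j a) xs k xo) has_derivative (\<lambda>h. - (r \<bullet> (V *v (Xmat xs *v h))))) (at (column j A))"
      unfolding loss_def column_upd r_def using True sq_deriv[OF bl, of "axis xo 1" "column k A"] by simp
    moreover have "- (r \<bullet> (V *v (Xmat xs *v h))) = (- (transpose (Xmat xs) *v (transpose V *v r))) \<bullet> h" for h
      by (simp add: dot_lmul_matrix[symmetric])
    ultimately show ?thesis using True r_def by simp
  next
    case False
    have "(\<lambda>a. loss V (upd_col A j a) xs k xo) = (\<lambda>a. loss V A xs k xo)"
      using False by (simp add: loss_def column_upd)
    then show ?thesis using False by simp
  qed
qed

lemma Xv: "(Xmat xs *v a)$l = (\<Sum>s\<in>UNIV. a$s * (if xs s = l then 1 else 0))"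
  by (simp add: Xmat_def matrix_vector_mult_def mult_ac)

lemma sum_Xv: "(\<Sum>l\<in>UNIV. f l * (Xmat xs *v a)$l) = (\<Sum>s\<in>UNIV. a$s * f (xs s))"
proof -
  have "(\<Sum>l\<in>UNIV. f l * (Xmat xs *v a)$l) = (\<Sum>s\<in>UNIV. a$s * (\<Sum>l\<in>UNIV. f l * (if xs s = l then 1 else 0)))"
    by (simp add: Xv sum_distrib_left mult_ac sum.swap[of _ "UNIV::'a set"])
  then show ?thesis by (simp add: sum_ind1')
qed

lemma VXv: "(V *v (Xmat xs *v a))$i = (\<Sum>s\<in>UNIV. a$s * V$i$(xs s))"
  using sum_Xv[of "\<lambda>l. V$i$l" xs a] by (simp add: matrix_vector_mult_def)

lemma XtV: "(transpose (Xmat xs) *v z)$t = z$(xs t)"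
  by (simp add: transpose_def Xmat_def matrix_vector_mult_def sum_ind1' mult.commute)

lemma expect_nth: "expect mu P Q f $ i = expect mu P Q (\<lambda>xs k xo. f xs k xo $ i)"
  by (simp add: expect_def)



lemma Mj: "(\<Sum>x\<in>UNIV. \<Sum>y\<in>UNIV. mu$x * mu$y * (f x * (if y = j then 1 else 0))) = (\<Sum>x\<in>UNIV. mu$x * f x) * (mu::real^'n::finite)$j"
proof -
  have "(\<Sum>x\<in>UNIV. \<Sum>y\<in>UNIV. mu$x * mu$y * (f x * (if y = j then 1 else 0))) = (\<Sum>x\<in>UNIV. \<Sum>y\<in>UNIV. (mu$x * f x * mu$y) * (if y = j then 1 else 0))"
    by (simp add: mult_ac)
  also have "\<dots> = (\<Sum>x\<in>UNIV. mu$x * f x * mu$j)" by (simp only: sum_ind1)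
  finally show ?thesis by (simp add: sum_distrib_right)
qed

lemma Dj: "(\<Sum>x\<in>UNIV. (mu::real^'n::finite)$x * (f x * (if x = j then 1 else 0))) = mu$j * f j"
proof -
  have "(\<Sum>x\<in>UNIV. mu$x * (f x * (if x = j then 1 else 0))) = (\<Sum>x\<in>UNIV. (mu$x * f x) * (if x = j then 1 else 0))"
    by (simp add: mult_ac)
  also have "\<dots> = mu$j * f j" by (simp only: sum_ind1)
  finally show ?thesis .
qed

lemma EGV_entry:
  fixes mu :: "real^'n::finite" and P V :: "real^'n^'n" and Q A :: "real^'n^'t::finite"
  assumes mu_sum: "(\<Sum>i\<in>UNIV. mu$i) = 1"
    and P_col: "\<forall>j. (\<Sum>i\<in>UNIV. P$i$j) = 1" and P_mu: "P *v mu = mu"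
    and Q_col: "\<forall>k. (\<Sum>t\<in>UNIV. Q$t$k) = 1"
    and A_col: "\<forall>k. (\<Sum>t\<in>UNIV. A$t$k) = 1" and V_mu: "V *v mu = mu"
  shows "expect mu P Q (\<lambda>xs k xo. grad (\<lambda>V'. loss V' A xs k xo) V) $ i $ j
     = (\<Sum>k\<in>UNIV. mu$k * ((\<Sum>t\<in>UNIV. A$t$k * A$t$k) * (mu$j * V$i$j - mu$i * mu$j)
                          - (\<Sum>t\<in>UNIV. Q$t$k * A$t$k) * (mu$j * P$i$j - mu$i * mu$j)))"
proof -
  define W where "W xs = (\<Prod>t\<in>UNIV. mu$(xs t))" for xs :: "'t \<Rightarrow> 'n"
  define wo where "wo xs k xo = (\<Sum>t\<in>UNIV. Q$t$k * P$xo$(xs t))" for xs :: "'t \<Rightarrow> 'n" and k xo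
  define y where "y xs k = Xmat xs *v column k A" for xs :: "'t \<Rightarrow> 'n" and k
  define G where "G xs k xo = ((V *v y xs k)$i - (if i = xo then 1 else 0)) * (y xs k)$j" for xs k xo
  have wo_sum: "(\<Sum>xo\<in>UNIV. wo xs k xo) = 1" for xs k
    unfolding wo_def using P_col Q_col by (simp add: sum.swap[of _ UNIV] sum_distrib_left[symmetric])
  have Vmu: "(\<Sum>x\<in>UNIV. V$i$x * mu$x) = mu$i" for i
    using arg_cong[OF V_mu, of "\<lambda>v. v$i"] by (simp add: matrix_vector_mult_def)
  have Pmu: "(\<Sum>x\<in>UNIV. P$i$x * mu$x) = mu$i" for i
    using arg_cong[OF P_mu, of "\<lambda>v. v$i"] by (simp add: matrix_vector_mult_def)
  have step1: "expect mu P Q (\<lambda>xs k xo. grad (\<lambda>V'. loss V' A xs k xo) V) $ i $ j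
      = (\<Sum>k\<in>UNIV. mu$k * (\<Sum>xs\<in>UNIV. W xs * (\<Sum>xo\<in>UNIV. wo xs k xo * G xs k xo)))"
    unfolding expect_def
    by (simp add: gradV W_def wo_def G_def y_def sum_distrib_left mult_ac sum.swap[of _ "UNIV::('t\<Rightarrow>'n) set"] algebra_simps axis_def)
  have step2: "(\<Sum>xo\<in>UNIV. wo xs k xo * G xs k xo) = (V *v y xs k)$i * (y xs k)$j - (y xs k)$j * wo xs k i" for xs k
  proof -
    have "(\<Sum>xo\<in>UNIV. wo xs k xo * G xs k xo) = (V *v y xs k)$i * (y xs k)$j * (\<Sum>xo\<in>UNIV. wo xs k xo)
        - (y xs k)$j * (\<Sum>xo\<in>UNIV. wo xs k xo * (if i = xo then 1 else 0))"
    proof -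
      have "wo xs k xo * G xs k xo = (V *v y xs k)$i * (y xs k)$j * wo xs k xo - (y xs k)$j * (wo xs k xo * (if i = xo then 1 else 0))" for xo
        unfolding G_def by (simp add: algebra_simps)
      then show ?thesis by (simp add: sum_subtractf sum_distrib_left[symmetric])
    qed
    then show ?thesis by (simp add: wo_sum sum_ind1')
  qed
  have step3: "(V *v y xs k)$i * (y xs k)$j = (\<Sum>s\<in>UNIV. \<Sum>r\<in>UNIV. A$s$k * A$r$k * (V$i$(xs s) * (if xs r = j then 1 else 0)))" for xs k
    unfolding y_def VXv Xv by (simp add: sum_product column_def mult_ac)
  have step4: "(y xs k)$j * wo xs k i = (\<Sum>s\<in>UNIV. \<Sum>r\<in>UNIV. Q$s$k * A$r$k * (P$i$(xs s) * (if xs r = j then 1 else 0)))" for xs k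
    unfolding y_def Xv wo_def by (simp add: sum_product column_def mult_ac)
  have step5: "(\<Sum>xs\<in>UNIV. W xs * (\<Sum>xo\<in>UNIV. wo xs k xo * G xs k xo))
     = (\<Sum>t\<in>UNIV. A$t$k * A$t$k) * (mu$j * V$i$j - mu$i * mu$j)
                          - (\<Sum>t\<in>UNIV. Q$t$k * A$t$k) * (mu$j * P$i$j - mu$i * mu$j)" for k
  proof -
    have "(\<Sum>xs\<in>UNIV. W xs * (\<Sum>xo\<in>UNIV. wo xs k xo * G xs k xo))
      = (\<Sum>xs\<in>UNIV. W xs * (\<Sum>s\<in>UNIV. \<Sum>r\<in>UNIV. A$s$k * A$r$k * (V$i$(xs s) * (if xs r = j then 1 else 0))))
      - (\<Sum>xs\<in>UNIV. W xs * (\<Sum>s\<in>UNIV. \<Sum>r\<in>UNIV. Q$s$k * A$r$k * (P$i$(xs s) * (if xs r = j then 1 else 0))))"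
      unfolding step2 step3 step4 by (simp add: right_diff_distrib sum_subtractf)
    also have "\<dots> = (\<Sum>t\<in>UNIV. A$t$k * A$t$k) * (mu$j * V$i$j - mu$i * mu$j)
                          - (\<Sum>t\<in>UNIV. Q$t$k * A$t$k) * (mu$j * P$i$j - mu$i * mu$j)"
    proof -
      have E1: "(\<Sum>xs\<in>UNIV. W xs * (\<Sum>s\<in>UNIV. \<Sum>r\<in>UNIV. A$s$k * A$r$k * (V$i$(xs s) * (if xs r = j then 1 else 0))))
         = 1 * 1 * ((\<Sum>x\<in>UNIV. mu$x * V$i$x) * mu$j) + (\<Sum>t\<in>UNIV. A$t$k * A$t$k) * (mu$j * V$i$j - (\<Sum>x\<in>UNIV. mu$x * V$i$x) * mu$j)"
        unfolding W_def using Ebil[OF mu_sum, of "\<lambda>s. A$s$k" "\<lambda>r. A$r$k" "\<lambda>a b. V$i$a * (if b = j then 1 else 0)"] A_col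
        by (simp add: Mj Dj)
      have E2: "(\<Sum>xs\<in>UNIV. W xs * (\<Sum>s\<in>UNIV. \<Sum>r\<in>UNIV. Q$s$k * A$r$k * (P$i$(xs s) * (if xs r = j then 1 else 0))))
         = 1 * 1 * ((\<Sum>x\<in>UNIV. mu$x * P$i$x) * mu$j) + (\<Sum>t\<in>UNIV. Q$t$k * A$t$k) * (mu$j * P$i$j - (\<Sum>x\<in>UNIV. mu$x * P$i$x) * mu$j)"
        unfolding W_def using Ebil[OF mu_sum, of "\<lambda>s. Q$s$k" "\<lambda>r. A$r$k" "\<lambda>a b. P$i$a * (if b = j then 1 else 0)"] A_col Q_col
        by (simp add: Mj Dj)
      have "(\<Sum>x\<in>UNIV. mu$x * V$i$x) = mu$i" "(\<Sum>x\<in>UNIV. mu$x * P$i$x) = mu$i"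
        using Vmu Pmu by (simp_all add: mult.commute)
      then show ?thesis unfolding E1 E2 by (simp add: algebra_simps)
    qed
    finally show ?thesis .
  qed
  show ?thesis unfolding step1 step5 ..
qed

lemma ind_first: "(\<Sum>s\<in>UNIV. \<Sum>r\<in>UNIV. (if s = t then 1 else 0) * b r * F s r) = (\<Sum>r\<in>(UNIV::'b::finite set). b r * F (t::'a::finite) r :: real)"
proof -
  have "(\<Sum>s\<in>UNIV. \<Sum>r\<in>UNIV. (if s = t then 1 else 0) * b r * F s r) = (\<Sum>s\<in>UNIV. (\<Sum>r\<in>UNIV. b r * F s r) * (if s = t then 1 else 0))"
    by (rule sum.cong[OF refl]) (simp add: sum_distrib_right)
  then show ?thesis by (simp only: sum_ind1)
qed

lemma M_bil: "(\<Sum>x\<in>UNIV. \<Sum>y\<in>UNIV. (mu::real^'n::finite)$x * mu$y * (\<Sum>i\<in>(UNIV::'m::finite set). f i x * g i y))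
   = (\<Sum>i\<in>UNIV. (\<Sum>x\<in>UNIV. f i x * mu$x) * (\<Sum>y\<in>UNIV. g i y * mu$y))"
proof -
  have "(\<Sum>x\<in>UNIV. \<Sum>y\<in>UNIV. mu$x * mu$y * (\<Sum>i\<in>(UNIV::'m set). f i x * g i y))
     = (\<Sum>x\<in>UNIV. \<Sum>i\<in>(UNIV::'m set). \<Sum>y\<in>UNIV. (f i x * mu$x) * (g i y * mu$y))"
    by (simp add: sum_distrib_left mult_ac sum.swap[of _ "UNIV::'m set"])
  also have "\<dots> = (\<Sum>i\<in>UNIV. \<Sum>x\<in>UNIV. \<Sum>y\<in>UNIV. (f i x * mu$x) * (g i y * mu$y))"
    by (rule sum.swap)
  also have "\<dots> = (\<Sum>i\<in>UNIV. (\<Sum>x\<in>UNIV. f i x * mu$x) * (\<Sum>y\<in>UNIV. g i y * mu$y))"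
    by (simp add: sum_product)
  finally show ?thesis .
qed

lemma TV: "(transpose V *v r)$l = (\<Sum>i\<in>UNIV. V$i$l * r$i)"
  by (simp add: transpose_def matrix_vector_mult_def)

lemma sum_k_if:
  fixes v' :: "'n::finite \<Rightarrow> 'b::finite \<Rightarrow> real^'a::finite"
  shows "(\<Sum>k\<in>UNIV. \<Sum>xo\<in>(UNIV::'b set). c k xo * ((if j = k then v' k xo else 0))$t) = (\<Sum>xo\<in>UNIV. c j xo * (v' j xo)$t)"
proof -
  have "(\<Sum>xo\<in>(UNIV::'b set). c k xo * ((if j = k then v' k xo else 0))$t) = (if k = j then (\<Sum>xo\<in>UNIV. c j xo * (v' j xo)$t) else 0)" for k
    by auto
  then show ?thesis by simp
qed

lemma EGA_entry:
  fixes mu :: "real^'n::finite" and P V :: "real^'n^'n" and Q A :: "real^'n^'t::finite"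
  assumes mu_sum: "(\<Sum>i\<in>UNIV. mu$i) = 1"
    and P_col: "\<forall>j. (\<Sum>i\<in>UNIV. P$i$j) = 1" and P_mu: "P *v mu = mu"
    and Q_col: "\<forall>k. (\<Sum>t\<in>UNIV. Q$t$k) = 1"
    and A_col: "\<forall>k. (\<Sum>t\<in>UNIV. A$t$k) = 1" and V_mu: "V *v mu = mu"
  shows "expect mu P Q (\<lambda>xs k xo. grad (\<lambda>a. loss V (upd_col A j a) xs k xo) (column j A)) $ t
     = mu$j * (A$t$j * ((\<Sum>x\<in>UNIV. mu$x * (\<Sum>i\<in>UNIV. V$i$x * V$i$x)) - (\<Sum>i\<in>UNIV. mu$i * mu$i))
             - Q$t$j * ((\<Sum>x\<in>UNIV. mu$x * (\<Sum>i\<in>UNIV. V$i$x * P$i$x)) - (\<Sum>i\<in>UNIV. mu$i * mu$i)))"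
proof -
  define W where "W xs = (\<Prod>t\<in>UNIV. mu$(xs t))" for xs :: "'t \<Rightarrow> 'n"
  define wo where "wo xs k xo = (\<Sum>t\<in>UNIV. Q$t$k * P$xo$(xs t))" for xs :: "'t \<Rightarrow> 'n" and k xo
  define y where "y xs = Xmat xs *v column j A" for xs :: "'t \<Rightarrow> 'n"
  define g where "g xs xo = (\<Sum>i\<in>UNIV. V$i$(xs t) * ((V *v y xs)$i - (if i = xo then 1 else 0)))" for xs xo
  have wo_sum: "(\<Sum>xo\<in>UNIV. wo xs k xo) = 1" for xs k
    unfolding wo_def using P_col Q_col by (simp add: sum.swap[of _ UNIV] sum_distrib_left[symmetric])
  have Vmu: "(\<Sum>x\<in>UNIV. V$i$x * mu$x) = mu$i" for i
    using arg_cong[OF V_mu, of "\<lambda>v. v$i"] by (simp add: matrix_vector_mult_def)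
  have Pmu: "(\<Sum>x\<in>UNIV. P$i$x * mu$x) = mu$i" for i
    using arg_cong[OF P_mu, of "\<lambda>v. v$i"] by (simp add: matrix_vector_mult_def)
  have step1: "expect mu P Q (\<lambda>xs k xo. grad (\<lambda>a. loss V (upd_col A j a) xs k xo) (column j A)) $ t
      = mu$j * (\<Sum>xs\<in>UNIV. W xs * (\<Sum>xo\<in>UNIV. wo xs j xo * g xs xo))"
  proof -
    have gt: "(- (transpose (Xmat xs) *v (transpose V *v (axis xo 1 - V *v (Xmat xs *v column j A)))))$t = g xs xo" for xs xo
      unfolding g_def y_def vector_uminus_component XtV unfolding TV
      by (simp add: sum_negf[symmetric] algebra_simps axis_def)
    have "expect mu P Q (\<lambda>xs k xo. grad (\<lambda>a. loss V (upd_col A j a) xs k xo) (column j A)) $ t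
      = (\<Sum>xs\<in>UNIV. \<Sum>k\<in>UNIV. \<Sum>xo\<in>UNIV. (W xs * mu$k * wo xs k xo) * ((if j = k then - (transpose (Xmat xs) *v (transpose V *v (axis xo 1 - V *v (Xmat xs *v column k A)))) else 0)$t))"
      unfolding expect_def gradA W_def wo_def by simp
    also have "\<dots> = (\<Sum>xs\<in>UNIV. \<Sum>xo\<in>UNIV. (W xs * mu$j * wo xs j xo) * g xs xo)"
      by (rule sum.cong[OF refl]) (simp only: sum_k_if gt)
    also have "\<dots> = mu$j * (\<Sum>xs\<in>UNIV. W xs * (\<Sum>xo\<in>UNIV. wo xs j xo * g xs xo))"
      by (simp add: sum_distrib_left mult_ac)
    finally show ?thesis .
  qed
  define S where "S xs = (\<Sum>i\<in>UNIV. V$i$(xs t) * (V *v y xs)$i)" for xs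
  have step2: "(\<Sum>xo\<in>UNIV. wo xs j xo * g xs xo) = S xs - (\<Sum>i\<in>UNIV. V$i$(xs t) * wo xs j i)" for xs
  proof -
    have gxo: "g xs xo = S xs - V$xo$(xs t)" for xo
    proof -
      have "g xs xo = S xs - (\<Sum>i\<in>UNIV. V$i$(xs t) * (if i = xo then 1 else 0))"
        unfolding g_def S_def by (simp add: algebra_simps sum_subtractf)
      then show ?thesis by (simp only: sum_ind1)
    qed
    then have "(\<Sum>xo\<in>UNIV. wo xs j xo * g xs xo) = (\<Sum>xo\<in>UNIV. wo xs j xo * S xs - V$xo$(xs t) * wo xs j xo)"
      by (intro sum.cong refl) (simp only: gxo right_diff_distrib mult.commute)
    also have "\<dots> = (\<Sum>xo\<in>UNIV. wo xs j xo) * S xs - (\<Sum>xo\<in>UNIV. V$xo$(xs t) * wo xs j xo)"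
      by (simp only: sum_subtractf sum_distrib_right)
    finally have "(\<Sum>xo\<in>UNIV. wo xs j xo * g xs xo) = (\<Sum>xo\<in>UNIV. wo xs j xo) * S xs - (\<Sum>xo\<in>UNIV. V$xo$(xs t) * wo xs j xo)" .
    then show ?thesis by (simp add: wo_sum)
  qed
  have step3: "S xs = (\<Sum>s\<in>UNIV. \<Sum>r\<in>UNIV. (if s = t then 1 else 0) * A$r$j * (\<Sum>i\<in>UNIV. V$i$(xs s) * V$i$(xs r)))" for xs
    unfolding ind_first S_def y_def VXv
    by (simp add: column_def sum_distrib_left mult_ac sum.swap[of _ "UNIV::'n set"])
  have step4: "(\<Sum>i\<in>UNIV. V$i$(xs t) * wo xs j i) = (\<Sum>s\<in>UNIV. \<Sum>r\<in>UNIV. (if s = t then 1 else 0) * Q$r$j * (\<Sum>i\<in>UNIV. V$i$(xs s) * P$i$(xs r)))" for xs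
    unfolding ind_first wo_def
    by (simp add: sum_distrib_left mult_ac sum.swap[of _ "UNIV::'n set"])
  have ind_sum: "(\<Sum>s\<in>UNIV. (if s = t then 1 else 0::real)) = 1" by simp
  have ind_b: "(\<Sum>s\<in>UNIV. (if s = t then 1 else 0) * b s) = (b t::real)" for b
    using sum_ind1[of b t] by (simp add: mult.commute)
  have MV: "(\<Sum>x\<in>UNIV. \<Sum>y\<in>UNIV. mu$x * mu$y * (\<Sum>i\<in>UNIV. V$i$x * V$i$y)) = (\<Sum>i\<in>UNIV. mu$i * mu$i)"
    by (simp only: M_bil Vmu)
  have MP: "(\<Sum>x\<in>UNIV. \<Sum>y\<in>UNIV. mu$x * mu$y * (\<Sum>i\<in>UNIV. V$i$x * P$i$y)) = (\<Sum>i\<in>UNIV. mu$i * mu$i)"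
    by (simp only: M_bil Vmu Pmu)
  have E3: "(\<Sum>xs\<in>UNIV. W xs * S xs) = 1 * 1 * (\<Sum>i\<in>UNIV. mu$i * mu$i) + A$t$j * ((\<Sum>x\<in>UNIV. mu$x * (\<Sum>i\<in>UNIV. V$i$x * V$i$x)) - (\<Sum>i\<in>UNIV. mu$i * mu$i))"
    unfolding W_def step3 using Ebil[OF mu_sum, of "\<lambda>s. if s = t then 1 else 0" "\<lambda>r. A$r$j" "\<lambda>a b. \<Sum>i\<in>UNIV. V$i$a * V$i$b"] A_col
    by (simp only: ind_sum ind_b MV)
  have E4: "(\<Sum>xs\<in>UNIV. W xs * (\<Sum>i\<in>UNIV. V$i$(xs t) * wo xs j i)) = 1 * 1 * (\<Sum>i\<in>UNIV. mu$i * mu$i) + Q$t$j * ((\<Sum>x\<in>UNIV. mu$x * (\<Sum>i\<in>UNIV. V$i$x * P$i$x)) - (\<Sum>i\<in>UNIV. mu$i * mu$i))"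
    unfolding W_def step4 using Ebil[OF mu_sum, of "\<lambda>s. if s = t then 1 else 0" "\<lambda>r. Q$r$j" "\<lambda>a b. \<Sum>i\<in>UNIV. V$i$a * P$i$b"] Q_col
    by (simp only: ind_sum ind_b MP)
  show ?thesis unfolding step1 step2
    by (simp only: right_diff_distrib sum_subtractf E3 E4) (simp add: algebra_simps)
qed



lemma expect_linear:
  assumes "linear L"
  shows "expect mu P Q (\<lambda>xs k xo. L (f xs k xo)) = L (expect mu P Q f)"
  unfolding expect_def by (simp add: linear_sum[OF assms] linear_scale[OF assms])

lemma matrix_add_rdistrib': "((A::real^'b::finite^'a::finite) + B) ** (C::real^'c::finite^'b) = A ** C + B ** C"
  by (vector matrix_matrix_mult_def sum.distrib[symmetric] field_simps)

lemma linear_sandwich: "linear (\<lambda>G::real^'b::finite^'a::finite. ((M::real^'a^'c::finite) ** G) ** (D::real^'d::finite^'b) ** (R::real^'e::finite^'d))"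
  by (rule linearI)
     (simp_all add: matrix_add_ldistrib matrix_add_rdistrib' matrix_scalar_ac scalar_matrix_assoc[symmetric])

lemma mu_inner_sum: "mu_inner mu M M' = (\<Sum>i\<in>UNIV. \<Sum>j\<in>UNIV. M$i$j * mu$j * M'$i$j)"
proof -
  have "(M ** diag_vec mu ** transpose M')$i$i = (\<Sum>j\<in>UNIV. M$i$j * mu$j * M'$i$j)" for i
  proof -
    have "(M ** diag_vec mu ** transpose M')$i$i = (\<Sum>l\<in>UNIV. (\<Sum>j\<in>UNIV. M$i$j * (if j = l then mu$j else 0)) * M'$i$l)"
      by (simp add: matrix_matrix_mult_def diag_vec_def transpose_def)
    also have "\<dots> = (\<Sum>l\<in>UNIV. M$i$l * mu$l * M'$i$l)"
    proof (rule sum.cong[OF refl])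
      fix l
      have "(\<Sum>j\<in>UNIV. M$i$j * (if j = l then mu$j else 0)) = (\<Sum>j\<in>UNIV. (M$i$j * mu$j) * (if j = l then 1 else 0))"
        by (rule sum.cong) auto
      then show "(\<Sum>j\<in>UNIV. M$i$j * (if j = l then mu$j else 0)) * M'$i$l = M$i$l * mu$l * M'$i$l"
        by (simp only: sum_ind1)
    qed
    finally show ?thesis .
  qed
  then show ?thesis unfolding mu_inner_def trace_def by simp
qed

lemma norm2_sum: "(norm (mu::real^'n::finite))^2 = (\<Sum>i\<in>UNIV. mu$i * mu$i)"
  by (simp add: power2_norm_eq_inner inner_vec_def)

lemma EA_lem:
  fixes mu :: "real^'n::finite" and P V :: "real^'n^'n" and Q A :: "real^'n^'t::finite"
  assumes mu_pos: "\<forall>i. mu$i > 0" and mu_sum: "(\<Sum>i\<in>UNIV. mu$i) = 1"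
    and P_col: "\<forall>j. (\<Sum>i\<in>UNIV. P$i$j) = 1" and P_mu: "P *v mu = mu"
    and Q_col: "\<forall>k. (\<Sum>t\<in>UNIV. Q$t$k) = 1"
    and A_col: "\<forall>k. (\<Sum>t\<in>UNIV. A$t$k) = 1" and V_mu: "V *v mu = mu"
  shows "expect mu P Q (pgrad_A mu V A) = (\<chi> t j. (A$t$j - 1 / real CARD('t)) * ((\<Sum>x\<in>UNIV. mu$x * (\<Sum>i\<in>UNIV. V$i$x * V$i$x)) - (\<Sum>i\<in>UNIV. mu$i * mu$i))
             - (Q$t$j - 1 / real CARD('t)) * ((\<Sum>x\<in>UNIV. mu$x * (\<Sum>i\<in>UNIV. V$i$x * P$i$x)) - (\<Sum>i\<in>UNIV. mu$i * mu$i)))"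
proof -
  define T where "T = real CARD('t)"
  define c1 where "c1 = (\<Sum>x\<in>UNIV. mu$x * (\<Sum>i\<in>UNIV. V$i$x * V$i$x)) - (\<Sum>i\<in>UNIV. mu$i * mu$i)"
  define c2 where "c2 = (\<Sum>x\<in>UNIV. mu$x * (\<Sum>i\<in>UNIV. V$i$x * P$i$x)) - (\<Sum>i\<in>UNIV. mu$i * mu$i)"
  have Tpos: "T > 0" unfolding T_def by simp
  have "expect mu P Q (pgrad_A mu V A) $ t $ j = (A$t$j - 1 / T) * c1 - (Q$t$j - 1 / T) * c2" for t j
  proof -
    define L where "L v = (1 / mu$j) * (((mat 1 - const_mat (1 / T) :: real^'t^'t) *v v) $ t)" for v :: "real^'t"
    have lin: "linear L"
      unfolding L_def by (rule linearI) (simp_all add: matrix_vector_right_distrib matrix_vector_mult_scaleR algebra_simps)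
    have Lv: "L v = (1 / mu$j) * (v$t - (1/T) * (\<Sum>s\<in>UNIV. v$s))" for v
    proof -
      have "((mat 1 - const_mat (1 / T) :: real^'t^'t) *v v) $ t = (\<Sum>s\<in>UNIV. v$s * (if t = s then 1 else 0) - (1/T) * v$s)"
        by (simp add: matrix_vector_mult_def mat_def const_mat_def algebra_simps)
      also have "\<dots> = v$t - (1/T) * (\<Sum>s\<in>UNIV. v$s)"
        by (simp only: sum_subtractf sum_ind1' sum_distrib_left)
      finally show ?thesis unfolding L_def by simp
    qed
    have "expect mu P Q (pgrad_A mu V A) $ t $ j = expect mu P Q (\<lambda>xs k xo. L (grad (\<lambda>a. loss V (upd_col A j a) xs k xo) (column j A)))"
      unfolding expect_nth pgrad_A_def L_def T_def by simp
    also have "\<dots> = L (expect mu P Q (\<lambda>xs k xo. grad (\<lambda>a. loss V (upd_col A j a) xs k xo) (column j A)))"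
      by (rule expect_linear[OF lin])
    also have "\<dots> = (1 / mu$j) * (mu$j * (A$t$j * c1 + - Q$t$j * c2) - (1/T) * (\<Sum>s\<in>UNIV. mu$j * (A$s$j * c1 + - Q$s$j * c2)))"
      unfolding Lv EGA_entry[OF mu_sum P_col P_mu Q_col A_col V_mu] c1_def c2_def by (simp add: algebra_simps)
    also have "\<dots> = (A$t$j - 1 / T) * c1 - (Q$t$j - 1 / T) * c2"
    proof -
      have sq: "(\<Sum>s\<in>UNIV. mu$j * (A$s$j * c1 + - Q$s$j * c2)) = mu$j * (c1 - c2)"
      proof -
        have "(\<Sum>s\<in>UNIV. mu$j * (A$s$j * c1 + - Q$s$j * c2)) = (\<Sum>s\<in>UNIV. (mu$j * c1) * A$s$j - (mu$j * c2) * Q$s$j)"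
          by (rule sum.cong) (simp_all add: algebra_simps)
        also have "\<dots> = (mu$j * c1) * (\<Sum>s\<in>UNIV. A$s$j) - (mu$j * c2) * (\<Sum>s\<in>UNIV. Q$s$j)"
          by (simp only: sum_subtractf sum_distrib_left[symmetric])
        finally show ?thesis using A_col Q_col by (simp add: algebra_simps)
      qed
      have nz: "mu$j \<noteq> 0" using mu_pos by (metis less_irrefl)
      show ?thesis unfolding sq using nz Tpos by (simp add: field_simps)
    qed
    finally show ?thesis .
  qed
  then show ?thesis unfolding c1_def c2_def T_def by (simp add: vec_eq_iff)
qed

lemma EV_lem:
  fixes mu :: "real^'n::finite" and P V :: "real^'n^'n" and Q A :: "real^'n^'t::finite"
  assumes mu_pos: "\<forall>i. mu$i > 0" and mu_sum: "(\<Sum>i\<in>UNIV. mu$i) = 1"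
    and P_col: "\<forall>j. (\<Sum>i\<in>UNIV. P$i$j) = 1" and P_mu: "P *v mu = mu"
    and Q_col: "\<forall>k. (\<Sum>t\<in>UNIV. Q$t$k) = 1"
    and A_col: "\<forall>k. (\<Sum>t\<in>UNIV. A$t$k) = 1" and V_mu: "V *v mu = mu"
    and V_col: "\<forall>j. (\<Sum>i\<in>UNIV. V$i$j) = 1"
  shows "expect mu P Q (pgrad_V mu V A) = (\<chi> i j. (\<Sum>k\<in>UNIV. mu$k * (\<Sum>t\<in>UNIV. A$t$k * A$t$k)) * (V$i$j - mu$i)
              - (\<Sum>k\<in>UNIV. mu$k * (\<Sum>t\<in>UNIV. Q$t$k * A$t$k)) * (P$i$j - mu$i))"
proof -
  define aa where "aa = (\<Sum>k\<in>UNIV. mu$k * (\<Sum>t\<in>UNIV. A$t$k * A$t$k))"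
  define aq where "aq = (\<Sum>k\<in>UNIV. mu$k * (\<Sum>t\<in>UNIV. Q$t$k * A$t$k))"
  define EG where "EG = expect mu P Q (\<lambda>xs k xo. grad (\<lambda>V'. loss V' A xs k xo) V)"
  define Y :: "real^'n^'n" where "Y = (\<chi> i j. aa * (V$i$j - mu$i) - aq * (P$i$j - mu$i))"
  define C :: "real^'n^'n" where "C = mat 1 - const_mat (1 / real CARD('n))"
  define Dg :: "real^'n^'n" where "Dg = diag_vec (\<chi> i. 1 / mu$i)"
  define R :: "real^'n^'n" where "R = mat 1 - (1 / (norm mu)^2) *\<^sub>R outer mu mu"
  have Vmu: "(\<Sum>x\<in>UNIV. V$i$x * mu$x) = mu$i" for i
    using arg_cong[OF V_mu, of "\<lambda>v. v$i"] by (simp add: matrix_vector_mult_def)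
  have Pmu: "(\<Sum>x\<in>UNIV. P$i$x * mu$x) = mu$i" for i
    using arg_cong[OF P_mu, of "\<lambda>v. v$i"] by (simp add: matrix_vector_mult_def)
  have nz: "mu$i \<noteq> 0" for i using mu_pos by (metis less_irrefl)
  have step1: "expect mu P Q (pgrad_V mu V A) = C ** EG ** Dg ** R"
    unfolding pgrad_V_def EG_def C_def Dg_def R_def by (rule expect_linear[OF linear_sandwich])
  have EG_eq: "EG $ a $ b = aa * (mu$b * V$a$b - mu$a * mu$b) - aq * (mu$b * P$a$b - mu$a * mu$b)" for a b
  proof -
    have "EG $ a $ b = (\<Sum>k\<in>UNIV. (mu$k * (\<Sum>t\<in>UNIV. A$t$k * A$t$k)) * (mu$b * V$a$b - mu$a * mu$b)
                          - (mu$k * (\<Sum>t\<in>UNIV. Q$t$k * A$t$k)) * (mu$b * P$a$b - mu$a * mu$b))"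
      unfolding EG_def EGV_entry[OF mu_sum P_col P_mu Q_col A_col V_mu] by (rule sum.cong) (simp_all add: algebra_simps)
    then show ?thesis unfolding aa_def aq_def by (simp only: sum_subtractf sum_distrib_right[symmetric])
  qed
  have s2: "EG ** Dg = Y"
  proof -
    have "(EG ** Dg) $ a $ b = Y $ a $ b" for a b
    proof -
      have "(EG ** Dg) $ a $ b = (\<Sum>l\<in>UNIV. (EG$a$l * (1 / mu$l)) * (if l = b then 1 else 0))"
        unfolding Dg_def diag_vec_def matrix_matrix_mult_def vec_lambda_beta by (intro sum.cong) auto
      also have "\<dots> = EG$a$b / mu$b" by (simp only: sum_ind1) simp
      also have "\<dots> = Y $ a $ b" unfolding EG_eq Y_def using nz[of b] by (simp add: field_simps)
      finally show ?thesis .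
    qed
    then show ?thesis by (simp add: vec_eq_iff)
  qed
  have s3: "Y ** R = Y"
  proof -
    have Ymu: "(\<Sum>l\<in>UNIV. Y$i$l * mu$l) = 0" for i
    proof -
      have "(\<Sum>l\<in>UNIV. Y$i$l * mu$l) = aa * (\<Sum>l\<in>UNIV. V$i$l * mu$l) - aa * mu$i * (\<Sum>l\<in>UNIV. mu$l)
             - aq * (\<Sum>l\<in>UNIV. P$i$l * mu$l) + aq * mu$i * (\<Sum>l\<in>UNIV. mu$l)"
        unfolding Y_def by (simp add: algebra_simps sum.distrib sum_subtractf sum_distrib_left)
      then show ?thesis using Vmu Pmu mu_sum by simp
    qed
    have "(Y ** R) $ i $ j = Y $ i $ j" for i j
    proof -
      have "(Y ** R) $ i $ j = (\<Sum>l\<in>UNIV. Y$i$l * (if l = j then 1 else 0)) - (1 / (norm mu)^2) * mu$j * (\<Sum>l\<in>UNIV. Y$i$l * mu$l)"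
        unfolding R_def matrix_matrix_mult_def outer_def mat_def
        by (simp add: algebra_simps sum_subtractf sum_distrib_left)
      then show ?thesis by (simp only: sum_ind1 Ymu)
    qed
    then show ?thesis by (simp add: vec_eq_iff)
  qed
  have s4: "C ** Y = Y"
  proof -
    have Ysum: "(\<Sum>l\<in>UNIV. Y$l$j) = 0" for j
    proof -
      have "(\<Sum>l\<in>UNIV. Y$l$j) = aa * (\<Sum>l\<in>UNIV. V$l$j) - aa * (\<Sum>l\<in>UNIV. mu$l)
             - aq * (\<Sum>l\<in>UNIV. P$l$j) + aq * (\<Sum>l\<in>UNIV. mu$l)"
        unfolding Y_def by (simp add: algebra_simps sum.distrib sum_subtractf sum_distrib_left)
      then show ?thesis using V_col P_col mu_sum by simp
    qed
    have "(C ** Y) $ i $ j = Y $ i $ j" for i j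
    proof -
      have "(C ** Y) $ i $ j = (\<Sum>l\<in>UNIV. Y$l$j * (if i = l then 1 else 0)) - (1 / real CARD('n)) * (\<Sum>l\<in>UNIV. Y$l$j)"
        unfolding C_def matrix_matrix_mult_def const_mat_def mat_def
        by (simp add: algebra_simps sum_subtractf sum_distrib_left)
      then show ?thesis by (simp only: sum_ind1' Ysum)
    qed
    then show ?thesis by (simp add: vec_eq_iff)
  qed
  show ?thesis unfolding step1 matrix_mul_assoc[of C EG Dg, symmetric] s2 s4 s3 unfolding Y_def aa_def aq_def ..
qed

lemma sum2_lin:
  "(\<Sum>i\<in>I. \<Sum>j\<in>J. c1 * f1 i j + c2 * f2 i j + c3 * f3 i j + c4 * f4 i j + c5 * f5 i j + c6 * f6 i j)
   = c1 * (\<Sum>i\<in>I. \<Sum>j\<in>J. f1 i j) + c2 * (\<Sum>i\<in>I. \<Sum>j\<in>J. f2 i j) + c3 * (\<Sum>i\<in>I. \<Sum>j\<in>J. f3 i j)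
     + c4 * (\<Sum>i\<in>I. \<Sum>j\<in>J. f4 i j) + c5 * (\<Sum>i\<in>I. \<Sum>j\<in>J. f5 i j) + c6 * (\<Sum>i\<in>I. \<Sum>j\<in>J. f6 i j :: real)"
  by (simp add: sum.distrib sum_distrib_left)

lemma NDV_lem:
  fixes mu :: "real^'n::finite" and P V :: "real^'n^'n"
  assumes mu_sum: "(\<Sum>i\<in>UNIV. mu$i) = 1" and P_mu: "P *v mu = mu" and V_mu: "V *v mu = mu"
  shows "mu_norm2 mu (V - x *\<^sub>R P - (1 - x) *\<^sub>R mu_ones mu)
    = (mu_norm2 mu V - (\<Sum>i\<in>UNIV. mu$i * mu$i)) - 2 * x * (mu_inner mu V P - (\<Sum>i\<in>UNIV. mu$i * mu$i))
      + x^2 * (mu_norm2 mu P - (\<Sum>i\<in>UNIV. mu$i * mu$i))"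
proof -
  define m2 where "m2 = (\<Sum>i\<in>UNIV. mu$i * mu$i)"
  have Vmu: "(\<Sum>x\<in>UNIV. V$i$x * mu$x) = mu$i" for i
    using arg_cong[OF V_mu, of "\<lambda>v. v$i"] by (simp add: matrix_vector_mult_def)
  have Pmu: "(\<Sum>x\<in>UNIV. P$i$x * mu$x) = mu$i" for i
    using arg_cong[OF P_mu, of "\<lambda>v. v$i"] by (simp add: matrix_vector_mult_def)
  have S1: "(\<Sum>i\<in>UNIV. \<Sum>j\<in>UNIV. mu$i * (V$i$j * mu$j)) = m2"
    unfolding m2_def by (simp only: sum_distrib_left[symmetric] Vmu)
  have S2: "(\<Sum>i\<in>UNIV. \<Sum>j\<in>UNIV. mu$i * (P$i$j * mu$j)) = m2"
    unfolding m2_def by (simp only: sum_distrib_left[symmetric] Pmu)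
  have S3: "(\<Sum>i\<in>UNIV. \<Sum>j\<in>UNIV. mu$i * mu$i * mu$j) = m2"
    unfolding m2_def by (simp only: sum_distrib_left[symmetric] mu_sum mult_1_right)
  have "mu_norm2 mu (V - x *\<^sub>R P - (1 - x) *\<^sub>R mu_ones mu)
     = (\<Sum>i\<in>UNIV. \<Sum>j\<in>UNIV. 1 * (V$i$j * mu$j * V$i$j) + (-2*x) * (V$i$j * mu$j * P$i$j) + x^2 * (P$i$j * mu$j * P$i$j)
         + (-2*(1-x)) * (mu$i * (V$i$j * mu$j)) + (2*x*(1-x)) * (mu$i * (P$i$j * mu$j)) + (1-x)^2 * (mu$i * mu$i * mu$j))"
    unfolding mu_norm2_def mu_inner_sum
    by (intro sum.cong refl) (simp add: mu_ones_def power2_eq_square algebra_simps)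
  also have "\<dots> = mu_norm2 mu V + (-2*x) * mu_inner mu V P + x^2 * mu_norm2 mu P + (-2*(1-x)) * m2 + (2*x*(1-x)) * m2 + (1-x)^2 * m2"
    unfolding sum2_lin S1 S2 S3 mu_norm2_def mu_inner_sum by simp
  finally show ?thesis unfolding m2_def[symmetric] by (simp add: power2_eq_square algebra_simps)
qed

lemma NDA_lem:
  fixes mu :: "real^'n::finite" and Q A :: "real^'n^'t::finite"
  assumes mu_sum: "(\<Sum>i\<in>UNIV. mu$i) = 1"
    and Q_col: "\<forall>k. (\<Sum>t\<in>UNIV. Q$t$k) = 1" and A_col: "\<forall>k. (\<Sum>t\<in>UNIV. A$t$k) = 1"
  shows "mu_norm2 mu (A - x *\<^sub>R Q - (1 - x) *\<^sub>R const_mat (1 / real CARD('t)))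
    = (mu_norm2 mu A - 1 / real CARD('t)) - 2 * x * (mu_inner mu A Q - 1 / real CARD('t))
      + x^2 * (mu_norm2 mu Q - 1 / real CARD('t))"
proof -
  define T where "T = real CARD('t)"
  have Tpos: "T > 0" unfolding T_def by simp
  have S1: "(\<Sum>i\<in>UNIV. \<Sum>j\<in>UNIV. A$i$j * mu$j) = 1"
  proof -
    have "(\<Sum>i\<in>UNIV. \<Sum>j\<in>UNIV. A$i$j * mu$j) = (\<Sum>j\<in>UNIV. \<Sum>i\<in>UNIV. A$i$j * mu$j)" by (rule sum.swap)
    also have "\<dots> = (\<Sum>j\<in>UNIV. (\<Sum>i\<in>UNIV. A$i$j) * mu$j)" by (simp only: sum_distrib_right)
    finally show ?thesis using A_col mu_sum by simp
  qed
  have S2: "(\<Sum>i\<in>UNIV. \<Sum>j\<in>UNIV. Q$i$j * mu$j) = 1"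
  proof -
    have "(\<Sum>i\<in>UNIV. \<Sum>j\<in>UNIV. Q$i$j * mu$j) = (\<Sum>j\<in>UNIV. \<Sum>i\<in>UNIV. Q$i$j * mu$j)" by (rule sum.swap)
    also have "\<dots> = (\<Sum>j\<in>UNIV. (\<Sum>i\<in>UNIV. Q$i$j) * mu$j)" by (simp only: sum_distrib_right)
    finally show ?thesis using Q_col mu_sum by simp
  qed
  have S3: "(\<Sum>i\<in>(UNIV::'t set). \<Sum>j\<in>UNIV. mu$j) = T"
    unfolding T_def using mu_sum by simp
  have "mu_norm2 mu (A - x *\<^sub>R Q - (1 - x) *\<^sub>R const_mat (1 / real CARD('t)))
     = (\<Sum>i\<in>UNIV. \<Sum>j\<in>UNIV. 1 * (A$i$j * mu$j * A$i$j) + (-2*x) * (A$i$j * mu$j * Q$i$j) + x^2 * (Q$i$j * mu$j * Q$i$j)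
         + (-2*(1-x)/T) * (A$i$j * mu$j) + (2*x*(1-x)/T) * (Q$i$j * mu$j) + ((1-x)^2/T^2) * (mu$j))"
    unfolding mu_norm2_def mu_inner_sum
    by (intro sum.cong refl) (use Tpos in \<open>simp add: const_mat_def T_def power2_eq_square field_simps\<close>)
  also have "\<dots> = mu_norm2 mu A + (-2*x) * mu_inner mu A Q + x^2 * mu_norm2 mu Q + (-2*(1-x)/T) * 1 + (2*x*(1-x)/T) * 1 + ((1-x)^2/T^2) * T"
    unfolding sum2_lin S1 S2 S3 mu_norm2_def mu_inner_sum by simp
  finally have F: "mu_norm2 mu (A - x *\<^sub>R Q - (1 - x) *\<^sub>R const_mat (1 / real CARD('t))) = mu_norm2 mu A + (-2*x) * mu_inner mu A Q + x^2 * mu_norm2 mu Q + (-2*(1-x)/T) * 1 + (2*x*(1-x)/T) * 1 + ((1-x)^2/T^2) * T" .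
  show ?thesis unfolding F using Tpos unfolding T_def by (simp add: power2_eq_square field_simps)
qed

lemma inner_swap: "(\<Sum>x\<in>UNIV. mu$x * (\<Sum>i\<in>UNIV. M$i$x * M'$i$x)) = mu_inner mu M M'"
proof -
  have "mu_inner mu M M' = (\<Sum>x\<in>UNIV. \<Sum>i\<in>UNIV. M$i$x * mu$x * M'$i$x)"
    unfolding mu_inner_sum by (rule sum.swap)
  also have "\<dots> = (\<Sum>x\<in>UNIV. mu$x * (\<Sum>i\<in>UNIV. M$i$x * M'$i$x))"
    by (simp add: sum_distrib_left mult_ac)
  finally show ?thesis by simp
qed

lemma mu_inner_sym: "mu_inner mu M M' = mu_inner mu M' M"
  unfolding mu_inner_sum by (simp add: mult_ac)

theorem lemmaC4:
  fixes mu :: "real^'n::finite" and P V :: "real^'n^'n" and Q A :: "real^'n^'t::finite"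
  assumes mu_pos: "\<forall>i. mu$i > 0" and mu_sum: "(\<Sum>i\<in>UNIV. mu$i) = 1"
    and P_nonneg: "\<forall>i j. P$i$j \<ge> 0" and P_col: "\<forall>j. (\<Sum>i\<in>UNIV. P$i$j) = 1"
    and P_mu: "P *v mu = mu"
    and Q_nonneg: "\<forall>t k. Q$t$k \<ge> 0" and Q_col: "\<forall>k. (\<Sum>t\<in>UNIV. Q$t$k) = 1"
    and KP_pos: "mu_norm2 mu P - (norm mu)^2 > 0"
    and KQ_pos: "mu_norm2 mu Q - 1 / real CARD('t) > 0"
    and V_col: "\<forall>j. (\<Sum>i\<in>UNIV. V$i$j) = 1"
    and A_col: "\<forall>k. (\<Sum>t\<in>UNIV. A$t$k) = 1"
    and V_mu: "V *v mu = mu"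
  shows "let T = real CARD('t);
             KP = mu_norm2 mu P - (norm mu)^2;
             KQ = mu_norm2 mu Q - 1 / T;
             aV = (mu_inner mu V P - (norm mu)^2) / KP;
             aA = (mu_inner mu A Q - 1 / T) / KQ;
             DV = V - aV *\<^sub>R P - (1 - aV) *\<^sub>R mu_ones mu;
             DA = A - aA *\<^sub>R Q - (1 - aA) *\<^sub>R const_mat (1 / T)
         in expect mu P Q (pgrad_A mu V A)
              = (KP * aV * (aV * aA - 1)) *\<^sub>R (Q - const_mat (1 / T))
                + (KP * aV^2) *\<^sub>R DA + mu_norm2 mu DV *\<^sub>R (A - const_mat (1 / T))
          \<and> expect mu P Q (pgrad_V mu V A)
              = (aA * KQ * (aA * aV - 1)) *\<^sub>R (P - mu_ones mu)
                + ((aV - 1) / T) *\<^sub>R (P - mu_ones mu)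
                + (aA^2 * KQ + 1 / T) *\<^sub>R DV + mu_norm2 mu DA *\<^sub>R (V - mu_ones mu)"
proof -
  have EA: "expect mu P Q (pgrad_A mu V A) = (\<chi> t j. (A$t$j - 1 / real CARD('t)) * (mu_norm2 mu V - (norm mu)^2)
             - (Q$t$j - 1 / real CARD('t)) * (mu_inner mu V P - (norm mu)^2))"
    unfolding EA_lem[OF mu_pos mu_sum P_col P_mu Q_col A_col V_mu] inner_swap norm2_sum mu_norm2_def ..
  have EV: "expect mu P Q (pgrad_V mu V A) = (\<chi> i j. mu_norm2 mu A * (V$i$j - mu$i) - mu_inner mu A Q * (P$i$j - mu$i))"
    unfolding EV_lem[OF mu_pos mu_sum P_col P_mu Q_col A_col V_mu V_col] inner_swap mu_norm2_def
    by (simp add: mu_inner_sym[of mu Q A])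
  have NDV: "mu_norm2 mu (V - x *\<^sub>R P - (1 - x) *\<^sub>R mu_ones mu)
    = (mu_norm2 mu V - (norm mu)^2) - 2 * x * (mu_inner mu V P - (norm mu)^2) + x^2 * (mu_norm2 mu P - (norm mu)^2)" for x
    unfolding NDV_lem[OF mu_sum P_mu V_mu] norm2_sum ..
  note NDA = NDA_lem[OF mu_sum Q_col A_col]
  define T where "T = real CARD('t)"
  define KP where "KP = mu_norm2 mu P - (norm mu)^2"
  define KQ where "KQ = mu_norm2 mu Q - 1 / T"
  define aV where "aV = (mu_inner mu V P - (norm mu)^2) / KP"
  define aA where "aA = (mu_inner mu A Q - 1 / T) / KQ"
  have Tpos: "T > 0" unfolding T_def by simp
  have KPnz: "KP \<noteq> 0" using KP_pos unfolding KP_def by simp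
  have KQnz: "KQ \<noteq> 0" using KQ_pos unfolding KQ_def T_def by simp
  have vp_eq: "mu_inner mu V P = KP * aV + (norm mu)^2" unfolding aV_def using KPnz by simp
  have aq_eq: "mu_inner mu A Q = KQ * aA + 1 / T" unfolding aA_def using KQnz by simp
  show ?thesis
    unfolding Let_def EA EV NDV NDA
    unfolding T_def[symmetric] unfolding KP_def[symmetric] KQ_def[symmetric] unfolding aV_def[symmetric] aA_def[symmetric]
    unfolding vp_eq aq_eq
    apply (rule conjI)
    subgoal apply (simp add: vec_eq_iff const_mat_def mu_ones_def) using Tpos by (simp add: field_simps power2_eq_square)
    subgoal apply (simp add: vec_eq_iff const_mat_def mu_ones_def) using Tpos by (simp add: field_simps power2_eq_square)
    done
qed

end
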